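(* Let $a_+>0$, $I_0>0$, let $t_0$ be an integer time, and let $N(t_0),N(t_0+1),N(t_0+2),\dots$ be nonnegative real numbers. Let $m$ be an integer with $0\le m<\lfloor a_+\rfloor+1$, and consider the linear system in the $m+1$ unknowns $x_0,\dots,x_m$ (where $x_a$ stands for $\mathcal{R}(t_0+m,a)$) consisting of the $m+1$ equations, for $k=0,1,\dots,m$, $$\sum_{j=0}^{k-1}N(t_0+k-j)\,x_{m-k+j}\;+\;I_0\,x_m\;+\;\sum_{d=1}^{m-k}N(t_0+m-d)\,x_d\;=\;N(t_0+m).$$ If $\prod_{j=1}^{m}N(t_0+j)\neq0$ (the empty product being $1$), then this linear system has a unique solution $(x_0,\dots,x_m)$.
   Context: This is the day-by-day (time step $1$) discretization of an infection-age-structured SIRS model started at time $t_0$ from a single cohort of $I_0$ infected individuals of infection age $0$; $N(t)$ is the number of newly infected individuals on day $t$, and $\mathcal{R}(t,a)=\tau(t)S(t)e^{-(\nu+D)a}\beta(a)$ is the reproductive power (rate at which an infectious individual at time $t$ and infection age $a$ produces secondary cases), with $\beta(a)=0$ for $a\ge a_+$. The $k$-th equation expresses $N(t_0+m)$ via the cohort structure present at time $t_0+k$, using that the cohort of infection age $j$ at time $t_0+k$ has size $e^{-(\nu+D)j}N(t_0+k-j)$ (and $I_0$ for the initial cohort). *)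

theory Defs
  imports Complex_Main "HOL-Library.FuncSet"
begin

end

theory Submission
  imports Defs
begin

lemma eqk:
  fixes N :: "int \<Rightarrow> real" and x :: "nat \<Rightarrow> real" and t0 :: int
  assumes "1 \<le> m" "k \<le> m"
  shows "(\<Sum>j<k. N (t0 + int k - int j) * x (m - k + j)) + I0 * x m
          + (\<Sum>d=1..m-k. N (t0 + int m - int d) * x d)
        = (\<Sum>i\<in>{1..<m}. N (t0 + int m - int i) * x i) + I0 * x m + N (t0 + int k) * x (m-k)"
proof -
  define f where "f i = N (t0 + int m - int i) * x i" for i
  have A1: "(\<Sum>j<k. N (t0 + int k - int j) * x (m - k + j)) = (\<Sum>j<k. f (j + (m-k)))"
    by (rule sum.cong) (use assms in \<open>auto simp: f_def of_nat_diff algebra_simps\<close>)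
  have A2: "(\<Sum>j<k. f (j + (m-k))) = (\<Sum>i\<in>{0+(m-k)..<k+(m-k)}. f i)"
    unfolding lessThan_atLeast0 sum.shift_bounds_nat_ivl by simp
  have A: "(\<Sum>j<k. N (t0 + int k - int j) * x (m - k + j)) = (\<Sum>i\<in>{m-k..<m}. f i)"
    using A1 A2 assms by simp
  have fk: "f (m-k) = N (t0 + int k) * x (m-k)"
    using assms by (simp add: f_def of_nat_diff)
  have B: "(\<Sum>i\<in>{m-k..<m}. f i) + (\<Sum>d=1..m-k. f d) = (\<Sum>i\<in>{1..<m}. f i) + f (m-k)"
  proof (cases "k = 0")
    case True
    then show ?thesis using assms by (simp add: atLeastLessThanSuc_atLeastAtMost[symmetric]
         sum.atLeastLessThan_Suc)
  next
    case False
    show ?thesis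
    proof (cases "k = m")
      case True
      then show ?thesis using assms
        by (simp add: sum.atLeast_Suc_lessThan)
    next
      case False
      have s1: "(\<Sum>d=1..m-k. f d) = (\<Sum>d\<in>{1..<m-k}. f d) + f (m-k)"
        using \<open>k \<noteq> 0\<close> False assms
        by (metis Suc_diff_le Suc_eq_plus1 atLeastLessThanSuc_atLeastAtMost diff_Suc_Suc diff_is_0_eq' le_add_diff_inverse2 less_one linorder_not_le nat_le_linear sum.atLeastLessThan_Suc)
      have s2: "(\<Sum>d\<in>{1..<m-k}. f d) + (\<Sum>i\<in>{m-k..<m}. f i) = (\<Sum>i\<in>{1..<m}. f i)"
        using \<open>k \<noteq> 0\<close> False assms
        by (intro sum.atLeastLessThan_concat) auto
      show ?thesis using s1 s2 by simp
    qed
  qed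
  show ?thesis using A B fk unfolding f_def by simp
qed

theorem theorem5p2:
  fixes a_plus I0 :: real and t0 :: int and N :: "int \<Rightarrow> real" and m :: nat
  assumes "a_plus > 0" and "I0 > 0"
    and "\<And>i::nat. N (t0 + int i) \<ge> 0"
    and "int m < \<lfloor>a_plus\<rfloor> + 1"
    and "(\<Prod>j=1..m. N (t0 + int j)) \<noteq> 0"
  shows "\<exists>!x. x \<in> {..m} \<rightarrow>\<^sub>E (UNIV :: real set) \<and>
           (\<forall>k\<le>m. (\<Sum>j<k. N (t0 + int k - int j) * x (m - k + j)) + I0 * x m
                    + (\<Sum>d=1..m-k. N (t0 + int m - int d) * x d) = N (t0 + int m))"
proof (cases "m = 0")
  case True
  let ?x = "\<lambda>i::nat. if i = 0 then N t0 / I0 else undefined"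
  show ?thesis
  proof (rule ex1I[of _ ?x])
    show "?x \<in> {..m} \<rightarrow>\<^sub>E (UNIV :: real set) \<and>
           (\<forall>k\<le>m. (\<Sum>j<k. N (t0 + int k - int j) * ?x (m - k + j)) + I0 * ?x m
                    + (\<Sum>d=1..m-k. N (t0 + int m - int d) * ?x d) = N (t0 + int m))"
      using True assms(2) by (auto simp: PiE_def extensional_def)
  next
    fix y assume h: "y \<in> {..m} \<rightarrow>\<^sub>E (UNIV :: real set) \<and>
           (\<forall>k\<le>m. (\<Sum>j<k. N (t0 + int k - int j) * y (m - k + j)) + I0 * y m
                    + (\<Sum>d=1..m-k. N (t0 + int m - int d) * y d) = N (t0 + int m))"
    then have "I0 * y 0 = N t0" using True by auto
    then have "y 0 = N t0 / I0" using assms(2) by (simp add: field_simps)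
    then show "y = ?x" using h True by (auto simp: PiE_def extensional_def)
  qed
next
  case False
  then have m1: "1 \<le> m" by simp
  have nz: "N (t0 + int k) \<noteq> 0" if "1 \<le> k" "k \<le> m" for k
    using assms(5) that by (auto simp: prod_zero_iff)
  have n0: "N t0 \<ge> 0" using assms(3)[of 0] by simp
  define S where "S y = (\<Sum>i\<in>{1..<m}. N (t0 + int m - int i) * y i) + I0 * y m" for y :: "nat \<Rightarrow> real"
  have equiv: "(\<forall>k\<le>m. (\<Sum>j<k. N (t0 + int k - int j) * y (m - k + j)) + I0 * y m
                    + (\<Sum>d=1..m-k. N (t0 + int m - int d) * y d) = N (t0 + int m))
     \<longleftrightarrow> (\<forall>k\<le>m. S y + N (t0 + int k) * y (m-k) = N (t0 + int m))" for y
    unfolding S_def using eqk[OF m1, of _ N t0 y I0] by (metis (no_types, lifting))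
  have den: "real m * N t0 + I0 > 0" using n0 assms(2) by (simp add: add_nonneg_pos)
  define xm where "xm = N (t0 + int m) / (real m * N t0 + I0)"
  define c where "c = N t0 * xm"
  define x where "x i = (if i \<le> m then (if i = m then xm else c / N (t0 + int (m - i))) else undefined)" for i
  have Sgen: "S y = real (m - 1) * c' + I0 * y m"
    if "\<And>i. 1 \<le> i \<Longrightarrow> i < m \<Longrightarrow> N (t0 + int m - int i) * y i = c'" for y c'
  proof -
    have "(\<Sum>i\<in>{1..<m}. N (t0 + int m - int i) * y i) = (\<Sum>i\<in>{1..<m}. c')"
      by (rule sum.cong) (auto simp: that)
    then show ?thesis unfolding S_def by simp
  qed
  have xi: "N (t0 + int m - int i) * x i = c" if "1 \<le> i" "i < m" for i
  proof -
    have ne: "N (t0 + int (m - i)) \<noteq> 0" using nz[of "m - i"] that by simp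
    have e: "t0 + int m - int i = t0 + int (m - i)" using that by (simp add: of_nat_diff)
    show ?thesis unfolding e using that ne by (simp add: x_def)
  qed
  have Sx: "S x = real (m - 1) * c + I0 * xm"
    using Sgen[of x c, OF xi] by (simp add: x_def)
  have mc: "real (m - 1) * c + c = real m * c" using m1 by (simp add: of_nat_diff algebra_simps)
  have key: "real m * c + I0 * xm = N (t0 + int m)"
  proof -
    have "real m * c + I0 * xm = (real m * N t0 + I0) * xm" unfolding c_def by (simp add: algebra_simps)
    also have "\<dots> = N (t0 + int m)" unfolding xm_def using den by simp
    finally show ?thesis .
  qed
  show ?thesis
  proof (rule ex1I[of _ x])
    have "\<forall>k\<le>m. S x + N (t0 + int k) * x (m-k) = N (t0 + int m)"
    proof (intro allI impI)
      fix k assume k: "k \<le> m"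
      have "N (t0 + int k) * x (m-k) = c"
      proof (cases "k = 0")
        case True then show ?thesis by (simp add: x_def c_def)
      next
        case False
        then have "N (t0 + int k) \<noteq> 0" using nz k by simp
        moreover have "m - (m - k) = k" using k by simp
        moreover have "m - k \<noteq> m" using k False by simp
        ultimately show ?thesis using False k by (simp add: x_def)
      qed
      then show "S x + N (t0 + int k) * x (m-k) = N (t0 + int m)"
        using Sx mc key by simp
    qed
    moreover have "x \<in> {..m} \<rightarrow>\<^sub>E (UNIV :: real set)" by (auto simp: x_def PiE_def extensional_def)
    ultimately show "x \<in> {..m} \<rightarrow>\<^sub>E (UNIV :: real set) \<and>
           (\<forall>k\<le>m. (\<Sum>j<k. N (t0 + int k - int j) * x (m - k + j)) + I0 * x m
                    + (\<Sum>d=1..m-k. N (t0 + int m - int d) * x d) = N (t0 + int m))"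
      using equiv by blast
  next
    fix y assume h: "y \<in> {..m} \<rightarrow>\<^sub>E (UNIV :: real set) \<and>
           (\<forall>k\<le>m. (\<Sum>j<k. N (t0 + int k - int j) * y (m - k + j)) + I0 * y m
                    + (\<Sum>d=1..m-k. N (t0 + int m - int d) * y d) = N (t0 + int m))"
    then have E: "\<And>k. k \<le> m \<Longrightarrow> S y + N (t0 + int k) * y (m-k) = N (t0 + int m)"
      using equiv by blast
    define c' where "c' = N (t0 + int m) - S y"
    have yk: "N (t0 + int k) * y (m-k) = c'" if "k \<le> m" for k
      using E[OF that] unfolding c'_def by simp
    have yi: "N (t0 + int m - int i) * y i = c'" if "1 \<le> i" "i < m" for i
    proof -
      have "t0 + int m - int i = t0 + int (m - i)" using that by (simp add: of_nat_diff)
      moreover have "m - (m - i) = i" using that by simp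
      ultimately show ?thesis using yk[of "m - i"] by (simp add: algebra_simps)
    qed
    have Sy: "S y = real (m - 1) * c' + I0 * y m" using Sgen[of y c', OF yi] by simp
    have c0: "N t0 * y m = c'" using yk[of 0] by simp
    have "real m * c' + I0 * y m = N (t0 + int m)"
      using Sy m1 unfolding c'_def by (simp add: of_nat_diff algebra_simps)
    then have "(real m * N t0 + I0) * y m = N (t0 + int m)"
      using c0 by (metis (no_types, lifting) distrib_right mult.assoc mult.commute)
    then have ym: "y m = xm" unfolding xm_def using den by (simp add: field_simps)
    then have cc: "c' = c" using c0 c_def by simp
    show "y = x"
    proof
      fix i
      show "y i = x i"
      proof (cases "i \<le> m")
        case False
        then show ?thesis using h by (auto simp: x_def PiE_def extensional_def)
      next
        case True
        show ?thesis
        proof (cases "i = m")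
          case True then show ?thesis using ym by (simp add: x_def)
        next
          case False
          have ne: "N (t0 + int (m - i)) \<noteq> 0" using nz[of "m - i"] False \<open>i \<le> m\<close> by simp
          have "N (t0 + int (m - i)) * y i = c" using yk[of "m - i"] \<open>i \<le> m\<close> cc by simp
          then show ?thesis using ne False \<open>i \<le> m\<close> by (simp add: x_def field_simps)
        qed
      qed
    qed
  qed
qed

end
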